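(* For any odd prime $p$, any integer $\alpha\ge0$ and any integer $n\ge0$, \[ b_4\!\left(p^{2\alpha+1}n+\frac{(8j+1)p^{2\alpha}-1}{8}\right)\equiv 0 \pmod 2 \] for every integer $j$ with $0\le j\le p-1$ and $\left(\frac{8j+1}{p}\right)=-1$.
   Context: For a positive integer $\ell$, $b_\ell(n)$ denotes the number of partitions of $n$ having no part divisible by $\ell$. $\left(\frac{a}{p}\right)$ is the Legendre symbol. *)

theory Defs
  imports "HOL-Number_Theory.Number_Theory" "HOL-Library.Multiset"
begin

definition b :: "nat \<Rightarrow> nat \<Rightarrow> nat" where
  "b l n = card {M :: nat multiset. (\<forall>x \<in># M. 0 < x \<and> \<not> l dvd x) \<and> sum_mset M = n}"

end

theory Submission
  imports Defs "HOL-Computational_Algebra.Formal_Power_Series" "HOL-Library.Z2"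
begin


definition SS :: "nat \<Rightarrow> nat \<Rightarrow> nat multiset set" where
  "SS N n = {M. (\<forall>x\<in>#M. 0 < x \<and> \<not> 4 dvd x \<and> x \<le> N) \<and> sum_mset M = n}"

lemma mem_le_sum_mset: "x \<in># (M::nat multiset) \<Longrightarrow> x \<le> sum_mset M"
  using sum_mset.remove[of x M] by simp

lemma SS_0: "SS 0 n = (if n = 0 then {{#}} else {})"
proof -
  have "\<And>M::nat multiset. (\<forall>x\<in>#M. 0 < x \<and> \<not> 4 dvd x \<and> x \<le> 0) \<longleftrightarrow> M = {#}"
    by (metis all_not_in_conv le_zero_eq less_not_refl set_mset_eq_empty_iff set_mset_empty empty_iff)
  then show ?thesis by (auto simp: SS_def)
qed

lemma SS_Suc: "SS (Suc N) n = SS N n \<union>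
   (if \<not> 4 dvd Suc N \<and> Suc N \<le> n then add_mset (Suc N) ` SS (Suc N) (n - Suc N) else {})"
proof (intro Set.set_eqI iffI)
  fix M assume M: "M \<in> SS (Suc N) n"
  show "M \<in> SS N n \<union>
   (if \<not> 4 dvd Suc N \<and> Suc N \<le> n then add_mset (Suc N) ` SS (Suc N) (n - Suc N) else {})"
  proof (cases "Suc N \<in># M")
    case True
    have d: "\<not> 4 dvd Suc N" using M True by (auto simp: SS_def)
    have le: "Suc N \<le> n" using M True mem_le_sum_mset by (auto simp: SS_def)
    have eq: "M = add_mset (Suc N) (M - {#Suc N#})" using True by simp
    have "sum_mset M = Suc N + sum_mset (M - {#Suc N#})"
      using sum_mset.remove[OF True] by simp
    moreover have "\<forall>x\<in>#M - {#Suc N#}. 0 < x \<and> \<not> 4 dvd x \<and> x \<le> Suc N"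
      using M by (auto simp: SS_def dest: in_diffD)
    ultimately have "M - {#Suc N#} \<in> SS (Suc N) (n - Suc N)"
      using M by (auto simp: SS_def)
    then show ?thesis using d le eq by (metis UnI2 image_eqI)
  next
    case False
    then have "M \<in> SS N n" using M by (auto simp: SS_def le_Suc_eq)
    then show ?thesis by simp
  qed
next
  fix M assume "M \<in> SS N n \<union>
   (if \<not> 4 dvd Suc N \<and> Suc N \<le> n then add_mset (Suc N) ` SS (Suc N) (n - Suc N) else {})"
  then consider "M \<in> SS N n" | "\<not> 4 dvd Suc N" "M \<in> add_mset (Suc N) ` SS (Suc N) (n - Suc N)" "Suc N \<le> n"
    by (auto split: if_splits)
  then show "M \<in> SS (Suc N) n"
  proof cases
    case 1 then show ?thesis unfolding SS_def by auto
  next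
    case 2
    then obtain M' where "M = add_mset (Suc N) M'" "M' \<in> SS (Suc N) (n - Suc N)" by auto
    then show ?thesis using 2 unfolding SS_def by auto
  qed
qed

lemma SS_finite: "finite (SS N n)"
proof (induction N arbitrary: n)
  case 0
  then show ?case by (simp add: SS_0)
next
  case (Suc N)
  show ?case
  proof (induction n rule: less_induct)
    case (less n)
    show ?case
    proof (cases "\<not> 4 dvd Suc N \<and> Suc N \<le> n")
      case True
      then have "finite (SS (Suc N) (n - Suc N))" using less by simp
      then show ?thesis using Suc.IH by (subst SS_Suc) simp
    next
      case False
      show ?thesis by (subst SS_Suc, subst if_not_P[OF False]) (simp add: Suc.IH)
    qed
  qed
qed

lemma SS_card_Suc: "card (SS (Suc N) n) = card (SS N n) +
   (if \<not> 4 dvd Suc N \<and> Suc N \<le> n then card (SS (Suc N) (n - Suc N)) else 0)"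
proof (cases "\<not> 4 dvd Suc N \<and> Suc N \<le> n")
  case True
  have eq: "SS (Suc N) n = SS N n \<union> add_mset (Suc N) ` SS (Suc N) (n - Suc N)"
    using SS_Suc[of N n] True by simp
  have "\<forall>M\<in>SS N n. Suc N \<notin># M" unfolding SS_def by fastforce
  then have disj: "SS N n \<inter> add_mset (Suc N) ` SS (Suc N) (n - Suc N) = {}"
    by fastforce
  have "card (SS (Suc N) n) = card (SS N n) + card (add_mset (Suc N) ` SS (Suc N) (n - Suc N))"
    unfolding eq by (rule card_Un_disjoint[OF SS_finite finite_imageI[OF SS_finite] disj])
  also have "card (add_mset (Suc N) ` SS (Suc N) (n - Suc N)) = card (SS (Suc N) (n - Suc N))"
    by (rule card_image) (auto simp: inj_on_def)
  finally show ?thesis using True by simp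
next
  case False
  have eq: "SS (Suc N) n = SS N n"
    using SS_Suc[of N n] False by simp
  show ?thesis unfolding eq if_not_P[OF False] by simp
qed

lemma b_eq_SS: "b 4 n = card (SS n n)"
proof -
  have "{M :: nat multiset. (\<forall>x \<in># M. 0 < x \<and> \<not> 4 dvd x) \<and> sum_mset M = n} = SS n n"
    by (auto simp: SS_def dest: mem_le_sum_mset)
  then show ?thesis by (simp add: b_def)
qed

lemma of_nat_bit: "(of_nat n :: bit) = (if even n then 0 else 1)"
  by (induction n) auto


section \<open>Power series over GF(2)\<close>

definition pf :: "nat \<Rightarrow> bit fps" where "pf e = 1 + fps_X ^ e"

lemma pf_mult_nth: "fps_nth (f * pf e) k = fps_nth f k + (if k < e then 0 else fps_nth f (k - e))"
  by (simp add: pf_def distrib_left fps_X_power_mult_right_nth)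

lemma bit_add_self [simp]: "(x::bit) + x = 0"
  by (cases x) auto

lemma bit_fps_minus: "(f::bit fps) - g = f + g"
  by (rule fps_ext) simp

definition F :: "nat \<Rightarrow> bit fps" where
  "F N = Abs_fps (\<lambda>k. of_nat (card (SS N k)))"

definition fac :: "nat \<Rightarrow> bit fps" where
  "fac m = (if 4 dvd m then 1 else pf m)"

definition Qd :: "nat \<Rightarrow> bit fps" where
  "Qd N = (\<Prod>m<N. fac (Suc m))"

lemma F_0: "F 0 = 1"
  by (rule fps_ext) (simp add: F_def SS_0)

lemma F_Suc: "F (Suc N) * fac (Suc N) = F N"
proof (cases "4 dvd Suc N")
  case True
  then show ?thesis
    by (intro fps_ext) (simp add: F_def fac_def SS_card_Suc[of N])
next
  case False
  show ?thesis
  proof (rule fps_ext)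
    fix k
    have "fps_nth (F (Suc N) * fac (Suc N)) k
        = fps_nth (F (Suc N)) k + (if k < Suc N then 0 else fps_nth (F (Suc N)) (k - Suc N))"
      using False by (simp add: fac_def pf_mult_nth del: of_nat_Suc)
    also have "\<dots> = fps_nth (F N) k"
    proof (cases "k < Suc N")
      case True
      then show ?thesis using False by (simp add: F_def SS_card_Suc[of N k])
    next
      case False': False
      have c: "card (SS (Suc N) k) = card (SS N k) + card (SS (Suc N) (k - Suc N))"
        using False False' SS_card_Suc[of N k] by simp
      have "(of_nat (card (SS N k) + card (SS (Suc N) (k - Suc N))) :: bit)
            + of_nat (card (SS (Suc N) (k - Suc N))) = of_nat (card (SS N k))"
        by (simp only: of_nat_add add.assoc bit_add_self add_0_right)
      then show ?thesis using False' by (simp only: F_def fps_nth_Abs_fps c if_False)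
    qed
    finally show "fps_nth (F (Suc N) * fac (Suc N)) k = fps_nth (F N) k" .
  qed
qed

lemma F_Qd: "F N * Qd N = 1"
proof (induction N)
  case 0
  then show ?case by (simp add: F_0 Qd_def)
next
  case (Suc N)
  have "F (Suc N) * Qd (Suc N) = (F (Suc N) * fac (Suc N)) * Qd N"
    by (simp add: Qd_def mult_ac)
  also have "\<dots> = 1" using Suc by (simp add: F_Suc)
  finally show ?case .
qed

lemma F_nth: "fps_nth (F n) n = of_nat (b 4 n)"
  by (simp add: F_def b_eq_SS)

section \<open>Truncated congruence\<close>

definition eqm :: "nat \<Rightarrow> bit fps \<Rightarrow> bit fps \<Rightarrow> bool" where
  "eqm k f g \<longleftrightarrow> (\<forall>i<k. fps_nth f i = fps_nth g i)"

lemma eqm_refl [simp]: "eqm k f f" by (simp add: eqm_def)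
lemma eqm_sym: "eqm k f g \<Longrightarrow> eqm k g f" by (simp add: eqm_def)
lemma eqm_trans: "eqm k f g \<Longrightarrow> eqm k g h \<Longrightarrow> eqm k f h" by (simp add: eqm_def)
lemma eqm_mono: "eqm k f g \<Longrightarrow> k' \<le> k \<Longrightarrow> eqm k' f g" by (simp add: eqm_def)

lemma eqm_mult_right: "eqm k f g \<Longrightarrow> eqm k (f * h) (g * h)"
  unfolding eqm_def fps_mult_nth by (auto intro!: sum.cong)

lemma eqm_mult_left: "eqm k f g \<Longrightarrow> eqm k (h * f) (h * g)"
  using eqm_mult_right[of k f g h] by (simp add: mult.commute)

lemma eqm_mult: "eqm k f g \<Longrightarrow> eqm k f' g' \<Longrightarrow> eqm k (f * f') (g * g')"
  by (meson eqm_mult_left eqm_mult_right eqm_trans)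

lemma eqm_add: "eqm k f g \<Longrightarrow> eqm k f' g' \<Longrightarrow> eqm k (f + f') (g + g')"
  by (simp add: eqm_def)

lemma eqm_sum: "(\<And>i. i \<in> S \<Longrightarrow> eqm k (f i) (g i)) \<Longrightarrow> eqm k (sum f S) (sum g S)"
  by (simp add: eqm_def fps_sum_nth)

lemma eqm_shift: "eqm k f g \<Longrightarrow> eqm (e + k) (fps_X ^ e * f) (fps_X ^ e * g)"
  unfolding eqm_def fps_X_power_mult_nth by auto

lemma eqm_unshift: "eqm (e + k) (fps_X ^ e * f) (fps_X ^ e * g) \<Longrightarrow> eqm k f g"
  unfolding eqm_def fps_X_power_mult_nth
proof (intro allI impI)
  fix i assume "\<forall>i<e + k. (if i < e then 0 else fps_nth f (i - e)) = (if i < e then 0 else fps_nth g (i - e))"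
    and "i < k"
  then show "fps_nth f i = fps_nth g i" by (metis add.commute add_diff_cancel_right' add_less_cancel_left not_add_less2)
qed

lemma eqm_Xpow_zero: "k \<le> e \<Longrightarrow> eqm k (fps_X ^ e * f) 0"
  unfolding eqm_def fps_X_power_mult_nth by auto

lemma eqm_pf: "k \<le> e \<Longrightarrow> eqm k (pf e) 1"
  unfolding eqm_def pf_def by auto

lemma eqm_prod_pf: "(\<And>i. i < (n::nat) \<Longrightarrow> k \<le> e i) \<Longrightarrow> eqm k (\<Prod>i<n. pf (e i)) 1"
proof (induction n)
  case 0 then show ?case by simp
next
  case (Suc n)
  have "eqm k ((\<Prod>i<n. pf (e i)) * pf (e n)) (1 * 1)"
    using Suc by (intro eqm_mult eqm_pf) auto
  then show ?case by simp
qed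

lemma eqm_cancel:
  assumes "eqm k (f * u) (g * u)" "fps_nth u 0 \<noteq> 0"
  shows "eqm k f g"
proof -
  have "eqm k (f * u * inverse u) (g * u * inverse u)"
    using assms(1) by (rule eqm_mult_right)
  moreover have "u * inverse u = 1" using assms(2) by (rule inverse_mult_eq_1')
  ultimately show ?thesis by (simp add: mult.assoc)
qed

lemma pf_nth0 [simp]: "fps_nth (pf (Suc e)) 0 = 1"
  by (simp add: pf_def)

lemma prod_split: "(\<Prod>i<a+b. f i) = (\<Prod>i<a. f i) * (\<Prod>i<b. f (a + i)) " for a b :: nat and f :: "nat \<Rightarrow> 'a::comm_monoid_mult"
  by (induction b) (simp_all add: mult_ac)

lemma prod_rev: "(\<Prod>i<n. f (n - Suc i)) = (\<Prod>i<n. (f i :: 'a::comm_monoid_mult))"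
proof (induction n)
  case 0 then show ?case by simp
next
  case (Suc n)
  have "(\<Prod>i<Suc n. f (Suc n - Suc i)) = f n * (\<Prod>i<n. f (n - Suc i))"
    by (subst prod.lessThan_Suc_shift) simp
  then show ?case using Suc by (simp add: mult.commute)
qed

fun qb :: "'a::comm_ring_1 \<Rightarrow> nat \<Rightarrow> nat \<Rightarrow> 'a" where
  "qb Q 0 k = (if k = 0 then 1 else 0)"
| "qb Q (Suc N) k = (if k = 0 then 1 else qb Q N k + Q ^ (Suc N - k) * qb Q N (k - 1))"

lemma qb_gt: "N < k \<Longrightarrow> qb Q N k = 0"
  by (induction N arbitrary: k) auto

lemma qb_0 [simp]: "qb Q N 0 = 1"
  by (cases N) auto

lemma qb_diag: "qb Q N N = 1"
  by (induction N) (auto simp: qb_gt)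

fun tri :: "nat \<Rightarrow> nat" where
  "tri 0 = 0"
| "tri (Suc i) = tri i + i"

definition pp :: "'a::comm_ring_1 \<Rightarrow> nat \<Rightarrow> 'a" where
  "pp Q j = (\<Prod>t<j. (1 - Q ^ Suc t))"

lemma pp_Suc: "pp Q (Suc j) = pp Q j * (1 - Q ^ Suc j)"
  by (simp add: pp_def)

lemma qb_prod: "k \<le> N \<Longrightarrow> qb Q N k * pp Q k * pp Q (N - k) = pp Q N"
proof (induction N arbitrary: k)
  case 0
  then show ?case by (simp add: pp_def)
next
  case (Suc N)
  show ?case
  proof (cases k)
    case 0
    then show ?thesis by (simp add: pp_def)
  next
    case (Suc k')
    show ?thesis
    proof (cases "k' = N")
      case True
      then show ?thesis using Suc by (simp add: qb_gt qb_diag pp_def)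
    next
      case False
      then have kN: "k \<le> N" and k'N: "k' \<le> N" using Suc \<open>k \<le> Suc N\<close> by auto
      have IH1: "qb Q N k * pp Q k * pp Q (N - k) = pp Q N" using Suc.IH[OF kN] .
      have IH2: "qb Q N k' * pp Q k' * pp Q (N - k') = pp Q N" using Suc.IH[OF k'N] .
      define a where "a = Q ^ Suc (N - k)"
      define c where "c = Q ^ k"
      have "Suc (N - k) + k = Suc N" using kN by simp
      then have ac: "a * c = Q ^ Suc N" unfolding a_def c_def by (metis power_add)
      have e1: "Suc N - k = Suc (N - k)" using kN by simp
      have e2: "N - k' = Suc (N - k)" using kN Suc by simp
      have pk: "pp Q k = pp Q k' * (1 - c)" unfolding c_def Suc by (simp add: pp_Suc)
      have pN: "pp Q (Suc (N - k)) = pp Q (N - k) * (1 - a)" unfolding a_def by (simp add: pp_Suc)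
      have "qb Q (Suc N) k * pp Q k * pp Q (Suc N - k)
          = (qb Q N k + a * qb Q N k') * pp Q k * pp Q (Suc (N - k))"
        using Suc e1 by (simp add: a_def)
      also have "\<dots> = (qb Q N k * pp Q k * pp Q (N - k)) * (1 - a)
                     + a * (qb Q N k' * pp Q k' * pp Q (N - k')) * (1 - c)"
        unfolding pN e2 pk by (simp add: algebra_simps)
      also have "\<dots> = pp Q N * (1 - a * c)"
        unfolding IH1 IH2 by (simp add: algebra_simps)
      also have "\<dots> = pp Q (Suc N)" by (simp add: ac pp_Suc)
      finally show ?thesis .
    qed
  qed
qed

lemma qbin_thm: "(\<Prod>r<N. (y + Q ^ r)) = (\<Sum>i<Suc N. qb Q N i * Q ^ tri i * y ^ (N - i))"
proof (induction N)
  case 0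
  then show ?case by simp
next
  case (Suc N)
  have "(\<Prod>r<Suc N. (y + Q ^ r)) = (\<Sum>i<Suc N. qb Q N i * Q ^ tri i * y ^ (N - i)) * (y + Q ^ N)"
    using Suc by simp
  also have "\<dots> = (\<Sum>i<Suc N. qb Q N i * Q ^ tri i * y ^ (N - i) * y)
                 + (\<Sum>i<Suc N. qb Q N i * Q ^ tri i * y ^ (N - i) * Q ^ N)"
    by (simp only: distrib_left sum_distrib_right)
  also have "\<dots> = (\<Sum>i<Suc N. qb Q N i * Q ^ tri i * y ^ (Suc N - i))
                 + (\<Sum>i<Suc N. qb Q N i * Q ^ (tri i + N) * y ^ (N - i))"
  proof (intro arg_cong2[where f="(+)"] sum.cong refl)
    fix i assume "i \<in> {..<Suc N}"
    then have "Suc N - i = Suc (N - i)" by simp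
    then show "qb Q N i * Q ^ tri i * y ^ (N - i) * y = qb Q N i * Q ^ tri i * y ^ (Suc N - i)"
      by (simp add: mult_ac)
  next
    fix i
    show "qb Q N i * Q ^ tri i * y ^ (N - i) * Q ^ N = qb Q N i * Q ^ (tri i + N) * y ^ (N - i)"
      by (simp add: power_add mult_ac)
  qed
  also have "(\<Sum>i<Suc N. qb Q N i * Q ^ tri i * y ^ (Suc N - i))
      = y ^ Suc N + (\<Sum>i<N. qb Q N (Suc i) * Q ^ tri (Suc i) * y ^ (N - i))"
    by (subst sum.lessThan_Suc_shift) simp
  also have "(\<Sum>i<Suc N. qb Q N i * Q ^ (tri i + N) * y ^ (N - i))
      = (\<Sum>i<Suc N. Q ^ (N - i) * qb Q N i * Q ^ tri (Suc i) * y ^ (N - i))"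
  proof (rule sum.cong)
    fix i assume "i \<in> {..<Suc N}"
    then have "tri i + N = (N - i) + tri (Suc i)" by simp
    then have h: "Q ^ (tri i + N) = Q ^ (N - i) * Q ^ tri (Suc i)" by (metis power_add)
    show "qb Q N i * Q ^ (tri i + N) * y ^ (N - i) = Q ^ (N - i) * qb Q N i * Q ^ tri (Suc i) * y ^ (N - i)"
      unfolding h by (simp only: mult_ac)
  qed simp
  also have "(\<Sum>i<N. qb Q N (Suc i) * Q ^ tri (Suc i) * y ^ (N - i))
      = (\<Sum>i<Suc N. qb Q N (Suc i) * Q ^ tri (Suc i) * y ^ (N - i))"
    by (simp add: qb_gt)
  also have "y ^ Suc N + (\<Sum>i<Suc N. qb Q N (Suc i) * Q ^ tri (Suc i) * y ^ (N - i))
        + (\<Sum>i<Suc N. Q ^ (N - i) * qb Q N i * Q ^ tri (Suc i) * y ^ (N - i))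
      = y ^ Suc N + (\<Sum>i<Suc N. qb Q (Suc N) (Suc i) * Q ^ tri (Suc i) * y ^ (N - i))"
    by (simp add: sum.distrib[symmetric] algebra_simps Suc_diff_le)
  also have "\<dots> = (\<Sum>i<Suc (Suc N). qb Q (Suc N) i * Q ^ tri i * y ^ (Suc N - i))"
    by (subst (2) sum.lessThan_Suc_shift) simp
  finally show ?case .
qed


definition AA :: "nat \<Rightarrow> bit fps" where "AA M = (\<Prod>m<M. pf (Suc m))"
definition DD :: "nat \<Rightarrow> bit fps" where "DD L = (\<Prod>j<L. pf (4 * j + 4))"
definition OP :: "nat \<Rightarrow> bit fps" where "OP K = (\<Prod>r<K. pf (4 * r + 1) * pf (4 * r + 3))"
definition EE :: "nat \<Rightarrow> bit fps" where "EE K = (\<Prod>j<K. pf (2 * j + 2))"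

lemma bit_fps_add_self: "(f::bit fps) + f = 0"
  by (rule fps_ext) (simp only: fps_add_nth bit_add_self fps_zero_nth)

lemma bit_fps_two_mult [simp]: "2 * (f::bit fps) = 0"
  by (simp only: mult_2 bit_fps_add_self)

lemma bit_fps_two [simp]: "(2::bit fps) = 0"
  using bit_fps_two_mult[of 1] by simp

lemma pf_sq: "pf m * pf m = pf (2 * m)"
proof -
  have "pf m * pf m = 1 + (fps_X ^ m + fps_X ^ m) + fps_X ^ m * fps_X ^ m"
    by (simp add: pf_def algebra_simps)
  also have "\<dots> = pf (2 * m)" by (simp add: pf_def power_add[symmetric] mult_2)
  finally show ?thesis .
qed

lemma X4_pow: "((fps_X::bit fps) ^ 4) ^ Suc t = fps_X ^ (4 * t + 4)"
proof -
  have h: "4 * Suc t = 4 * t + 4" by simp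
  show ?thesis by (simp only: power_mult[symmetric] h)
qed

lemma pp_DD: "pp (fps_X ^ 4) j = DD j"
  unfolding pp_def DD_def
  by (intro prod.cong refl) (simp only: bit_fps_minus pf_def X4_pow)

lemma Qd_DD: "Qd N * DD (N div 4) = AA N"
proof (induction N)
  case 0 then show ?case by (simp add: Qd_def DD_def AA_def)
next
  case (Suc N)
  show ?case
  proof (cases "4 dvd Suc N")
    case True
    then have d: "Suc N div 4 = Suc (N div 4)" by presburger
    have e: "4 * (N div 4) + 4 = Suc N" using True by presburger
    have q: "Qd (Suc N) = Qd N" using True by (simp add: Qd_def fac_def)
    have dd: "DD (Suc N div 4) = DD (N div 4) * pf (Suc N)"
      unfolding d DD_def prod.lessThan_Suc e ..
    have "Qd (Suc N) * DD (Suc N div 4) = (Qd N * DD (N div 4)) * pf (Suc N)"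
      by (simp only: q dd mult_ac)
    then show ?thesis using Suc by (simp add: AA_def)
  next
    case False
    then have d: "Suc N div 4 = N div 4" by presburger
    have "Qd (Suc N) * DD (Suc N div 4) = (Qd N * DD (N div 4)) * pf (Suc N)"
      unfolding d using False by (simp add: Qd_def DD_def fac_def mult_ac)
    then show ?thesis using Suc by (simp add: AA_def)
  qed
qed

lemma AA_OP_EE: "AA (4 * K) = OP K * EE (2 * K)"
proof (induction K)
  case 0 then show ?case by (simp add: AA_def OP_def EE_def)
next
  case (Suc K)
  have a: "4 * Suc K = Suc (Suc (Suc (Suc (4 * K))))" by simp
  have e: "2 * Suc K = Suc (Suc (2 * K))" by simp
  have AS: "\<And>M. AA (Suc M) = AA M * pf (Suc M)" by (simp add: AA_def)
  have OS: "OP (Suc K) = OP K * (pf (4 * K + 1) * pf (4 * K + 3))" by (simp add: OP_def)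
  have ES: "\<And>M. EE (Suc M) = EE M * pf (2 * M + 2)" by (simp add: EE_def)
  have n1: "4 * K + 1 = Suc (4 * K)" by simp
  have n2: "4 * K + 3 = Suc (Suc (Suc (4 * K)))" by simp
  have n3: "2 * (2 * K) + 2 = Suc (Suc (4 * K))" by simp
  have n4: "2 * Suc (2 * K) + 2 = Suc (Suc (Suc (Suc (4 * K))))" by simp
  show ?case
    unfolding a e AS ES OS Suc.IH n1 n2 n3 n4 by (simp only: mult_ac)
qed

lemma EE_AA: "EE M = AA M * AA M"
  unfolding EE_def AA_def prod.distrib[symmetric]
  by (intro prod.cong refl) (simp add: pf_sq)

lemma EE_nz: "EE M \<noteq> 0"
proof -
  have "fps_nth (EE M) 0 = 1"
    unfolding EE_def by (induction M) simp_all
  then show ?thesis by auto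
qed

lemma euler_trunc: "eqm (Suc (2 * K)) (AA (2 * K) * OP K) 1"
proof -
  define T where "T = (\<Prod>i<2 * K. pf (Suc (2 * K + i)))"
  have h4: "4 * K = 2 * K + 2 * K" by simp
  have A4: "AA (4 * K) = AA (2 * K) * T"
    unfolding AA_def T_def h4 by (rule prod_split)
  have "(AA (2 * K) * OP K) * EE (2 * K) = T * EE (2 * K)"
  proof -
    have "(AA (2 * K) * OP K) * EE (2 * K) = AA (2 * K) * AA (4 * K)"
      by (simp only: AA_OP_EE mult.assoc)
    also have "\<dots> = T * EE (2 * K)" unfolding A4 EE_AA by (simp only: mult_ac)
    finally show ?thesis .
  qed
  then have "AA (2 * K) * OP K = T" using EE_nz mult_right_cancel by blast
  moreover have "eqm (Suc (2 * K)) T 1"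
    unfolding T_def by (rule eqm_prod_pf) simp
  ultimately show ?thesis by simp
qed


section \<open>Jacobi-type identity\<close>

lemma xpf: "fps_X ^ a * pf d = fps_X ^ a + (fps_X::bit fps) ^ (a + d)"
  by (simp add: pf_def distrib_left power_add)

lemma prod_X4: "(\<Prod>r<K. (fps_X::bit fps) ^ (4 * r)) = fps_X ^ (2 * K * (K - 1))"
proof (induction K)
  case 0 then show ?case by simp
next
  case (Suc K)
  have "2 * K * (K - 1) + 4 * K = 2 * Suc K * (Suc K - 1)"
    by (cases K) (simp_all add: algebra_simps)
  then show ?case using Suc by (simp add: power_add[symmetric])
qed

lemma jtp_prod:
  assumes "1 \<le> K"
  shows "(\<Prod>r<2 * K. ((fps_X::bit fps) ^ (4 * K - 1) + (fps_X ^ 4) ^ r))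
         = fps_X ^ (2 * K * (K - 1) + K * (4 * K - 1)) * OP K"
proof -
  define f where "f r = ((fps_X::bit fps) ^ (4 * K - 1) + (fps_X ^ 4) ^ r)" for r
  have h2: "2 * K = K + K" by simp
  have p1: "(\<Prod>r<K. f r) = fps_X ^ (2 * K * (K - 1)) * (\<Prod>r<K. pf (4 * r + 3))"
  proof -
    have "(\<Prod>r<K. f r) = (\<Prod>r<K. fps_X ^ (4 * r) * pf (4 * (K - Suc r) + 3))"
    proof (intro prod.cong refl)
      fix r assume "r \<in> {..<K}"
      then have e: "4 * r + (4 * (K - Suc r) + 3) = 4 * K - 1" by auto
      show "f r = fps_X ^ (4 * r) * pf (4 * (K - Suc r) + 3)"
        unfolding xpf e f_def by (simp add: power_mult[symmetric] add.commute)
    qed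
    also have "\<dots> = (\<Prod>r<K. fps_X ^ (4 * r)) * (\<Prod>r<K. pf (4 * (K - Suc r) + 3))"
      by (rule prod.distrib)
    also have "(\<Prod>r<K. pf (4 * (K - Suc r) + 3)) = (\<Prod>r<K. pf (4 * r + 3))"
      by (rule prod_rev[where f="\<lambda>r. pf (4 * r + 3)"])
    finally show ?thesis by (simp add: prod_X4)
  qed
  have p2: "(\<Prod>r<K. f (K + r)) = fps_X ^ (K * (4 * K - 1)) * (\<Prod>r<K. pf (4 * r + 1))"
  proof -
    have "(\<Prod>r<K. f (K + r)) = (\<Prod>r<K. fps_X ^ (4 * K - 1) * pf (4 * r + 1))"
    proof (intro prod.cong refl)
      fix r assume "r \<in> {..<K}"
      have e: "4 * K - 1 + (4 * r + 1) = 4 * (K + r)" using assms by simp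
      show "f (K + r) = fps_X ^ (4 * K - 1) * pf (4 * r + 1)"
        unfolding xpf e f_def by (simp add: power_mult[symmetric])
    qed
    also have "\<dots> = (fps_X ^ (4 * K - 1)) ^ K * (\<Prod>r<K. pf (4 * r + 1))"
      by (simp add: prod.distrib)
    finally show ?thesis by (simp add: power_mult[symmetric] mult.commute)
  qed
  have "(\<Prod>r<2 * K. f r) = (\<Prod>r<K. f r) * (\<Prod>r<K. f (K + r))"
    unfolding h2 by (rule prod_split)
  also have "\<dots> = fps_X ^ (2 * K * (K - 1) + K * (4 * K - 1)) * OP K"
    unfolding p1 p2 OP_def prod.distrib power_add by (simp only: mult_ac)
  finally show ?thesis unfolding f_def .
qed

lemma tri_2: "2 * tri i = i * (i - 1)"
proof (induction i)
  case 0 then show ?case by simp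
next
  case (Suc i) then show ?case by (cases i) (simp_all add: algebra_simps)
qed

definition gg :: "nat \<Rightarrow> nat \<Rightarrow> nat" where
  "gg K i = nat (2 * (int i - int K)^2 - (int i - int K))"

lemma gg_int: "int (gg K i) = 2 * (int i - int K)^2 - (int i - int K)"
  and gg_abs: "\<bar>int i - int K\<bar> \<le> int (gg K i)"
proof -
  define m where "m = int i - int K"
  have *: "0 \<le> 2 * m^2 - m \<and> \<bar>m\<bar> \<le> 2 * m^2 - m"
  proof (cases "m \<ge> 1")
    case True
    then have "m * 1 \<le> m * m" by (intro mult_left_mono) auto
    then show ?thesis using True by (simp add: power2_eq_square)
  next
    case False
    then have m0: "m \<le> 0" by simp
    have mm: "0 \<le> m * m" by simp
    have "\<bar>m\<bar> = - m" using m0 by simp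
    then show ?thesis using m0 mm unfolding power2_eq_square by linarith
  qed
  show "int (gg K i) = 2 * (int i - int K)^2 - (int i - int K)"
    using * unfolding gg_def m_def by simp
  then show "\<bar>int i - int K\<bar> \<le> int (gg K i)" using * unfolding m_def by simp
qed

lemma expo:
  assumes "i \<le> 2 * K" "1 \<le> K"
  shows "4 * tri i + (4 * K - 1) * (2 * K - i) = (2 * K * (K - 1) + K * (4 * K - 1)) + gg K i"
proof -
  have t: "2 * int (tri i) = int i * (int i - 1)"
  proof -
    have "int (2 * tri i) = int (i * (i - 1))" by (simp only: tri_2)
    then show ?thesis by (cases i) (simp_all add: algebra_simps)
  qed
  have k1: "int (4 * K - 1) = 4 * int K - 1" using assms by (simp add: of_nat_diff)
  have k2: "int (2 * K - i) = 2 * int K - int i" using assms by (simp add: of_nat_diff)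
  have k3: "int (K - 1) = int K - 1" using assms by (simp add: of_nat_diff)
  have "int (4 * tri i + (4 * K - 1) * (2 * K - i))
       = 2 * (2 * int (tri i)) + (4 * int K - 1) * (2 * int K - int i)"
    by (simp only: of_nat_add of_nat_mult k1 k2 of_nat_numeral mult.assoc)
  also have "\<dots> = 2 * int K * (int K - 1) + int K * (4 * int K - 1) + int (gg K i)"
    unfolding t gg_int by (simp add: algebra_simps power2_eq_square)
  also have "\<dots> = int ((2 * K * (K - 1) + K * (4 * K - 1)) + gg K i)"
    by (simp only: of_nat_add of_nat_mult k1 k3 of_nat_numeral)
  finally show ?thesis by (simp only: of_nat_eq_iff)
qed

lemma min_int:
  assumes "i \<le> 2 * K"
  shows "int (min i (2 * K - i)) = int K - \<bar>int i - int K\<bar>"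
  using assms by (auto simp: min_def abs_if of_nat_diff)




lemma DD_nth0: "fps_nth (DD L) 0 = 1"
  unfolding DD_def by (induction L) (simp_all add: pf_def)

lemma DD_ext: assumes "j \<le> L" shows "eqm (4 * (j + 1)) (DD j) (DD L)"
proof -
  have h: "L = j + (L - j)" using assms by simp
  have "DD L = DD j * (\<Prod>t<L - j. pf (4 * (j + t) + 4))"
    unfolding DD_def by (subst h) (rule prod_split)
  moreover have "eqm (4 * (j + 1)) (\<Prod>t<L - j. pf (4 * (j + t) + 4)) 1"
    by (rule eqm_prod_pf) simp
  ultimately show ?thesis using eqm_mult_left[of "4 * (j + 1)" _ 1 "DD j"]
    by (simp add: eqm_sym)
qed

lemma AA_ext: assumes "j \<le> L" shows "eqm (Suc j) (AA j) (AA L)"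
proof -
  have h: "L = j + (L - j)" using assms by simp
  have "AA L = AA j * (\<Prod>t<L - j. pf (Suc (j + t)))"
    unfolding AA_def by (subst h) (rule prod_split)
  moreover have "eqm (Suc j) (\<Prod>t<L - j. pf (Suc (j + t))) 1"
    by (rule eqm_prod_pf) simp
  ultimately show ?thesis using eqm_mult_left[of "Suc j" _ 1 "AA j"]
    by (simp add: eqm_sym)
qed

lemma qb_DD:
  assumes "i \<le> M" "M \<le> L"
  shows "eqm (4 * (min i (M - i) + 1)) (qb (fps_X ^ 4) M i * DD L) 1"
proof -
  define k where "k = 4 * (min i (M - i) + 1)"
  have "eqm (4 * (i + 1)) (DD i) (DD L)" using assms by (intro DD_ext) simp
  then have e1: "eqm k (DD i) (DD L)" by (rule eqm_mono) (simp add: k_def)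
  have "eqm (4 * (M - i + 1)) (DD (M - i)) (DD L)" using assms by (intro DD_ext) simp
  then have e2: "eqm k (DD (M - i)) (DD L)" by (rule eqm_mono) (simp add: k_def)
  have "eqm (4 * (M + 1)) (DD M) (DD L)" using assms by (intro DD_ext) simp
  then have e3: "eqm k (DD M) (DD L)" by (rule eqm_mono) (simp add: k_def)
  have pr: "qb (fps_X ^ 4) M i * DD i * DD (M - i) = DD M"
    using qb_prod[OF assms(1), of "(fps_X::bit fps) ^ 4"] unfolding pp_DD .
  have "eqm k (qb (fps_X ^ 4) M i * DD L * DD L) (qb (fps_X ^ 4) M i * DD i * DD (M - i))"
    by (rule eqm_mult[OF eqm_mult[OF eqm_refl eqm_sym[OF e1]] eqm_sym[OF e2]])
  then have "eqm k (qb (fps_X ^ 4) M i * DD L * DD L) (DD L)"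
    unfolding pr by (rule eqm_trans) (rule e3)
  then have "eqm k ((qb (fps_X ^ 4) M i * DD L) * DD L) (1 * DD L)"
    by simp
  then show ?thesis unfolding k_def[symmetric]
    by (rule eqm_cancel) (simp add: DD_nth0)
qed

lemma main_jtp:
  fixes N :: nat
  defines "K \<equiv> 2 * N + 1"
  shows "eqm (Suc N) (OP K * DD (2 * K)) (\<Sum>i<Suc (2 * K). fps_X ^ gg K i)"
proof -
  define c where "c = 2 * K * (K - 1) + K * (4 * K - 1)"
  define L where "L = 2 * K"
  define t where "t i = qb ((fps_X::bit fps) ^ 4) (2 * K) i" for i
  have K1: "1 \<le> K" unfolding K_def by simp
  have j1: "fps_X ^ c * OP K = (\<Prod>r<2 * K. ((fps_X::bit fps) ^ (4 * K - 1) + (fps_X ^ 4) ^ r))"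
    unfolding c_def by (rule jtp_prod[OF K1, symmetric])
  have q1: "(\<Prod>r<2 * K. ((fps_X::bit fps) ^ (4 * K - 1) + (fps_X ^ 4) ^ r))
     = (\<Sum>i<Suc (2 * K). t i * (fps_X ^ 4) ^ tri i * (fps_X ^ (4 * K - 1)) ^ (2 * K - i))"
    unfolding t_def by (rule qbin_thm)
  have "fps_X ^ c * (OP K * DD L) = (fps_X ^ c * OP K) * DD L" by (simp only: mult.assoc)
  also have "\<dots> = (\<Sum>i<Suc (2 * K). t i * (fps_X ^ 4) ^ tri i * (fps_X ^ (4 * K - 1)) ^ (2 * K - i)) * DD L"
    by (simp only: j1 q1)
  also have "\<dots> = (\<Sum>i<Suc (2 * K). fps_X ^ (c + gg K i) * (t i * DD L))"
    unfolding sum_distrib_right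
  proof (rule sum.cong[OF refl])
    fix i assume "i \<in> {..<Suc (2 * K)}"
    then have i: "i \<le> 2 * K" by simp
    have eq: "((fps_X::bit fps) ^ 4) ^ tri i * (fps_X ^ (4 * K - 1)) ^ (2 * K - i) = fps_X ^ (c + gg K i)"
      unfolding c_def expo[OF i K1, symmetric] by (simp only: power_mult power_add)
    have "t i * (fps_X ^ 4) ^ tri i * (fps_X ^ (4 * K - 1)) ^ (2 * K - i) * DD L
        = (((fps_X::bit fps) ^ 4) ^ tri i * (fps_X ^ (4 * K - 1)) ^ (2 * K - i)) * (t i * DD L)"
      by (simp only: mult_ac)
    then show "t i * (fps_X ^ 4) ^ tri i * (fps_X ^ (4 * K - 1)) ^ (2 * K - i) * DD L
        = fps_X ^ (c + gg K i) * (t i * DD L)"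
      unfolding eq .
  qed
  finally have lhs: "fps_X ^ c * (OP K * DD L) = (\<Sum>i<Suc (2 * K). fps_X ^ (c + gg K i) * (t i * DD L))" .
  have e: "eqm (c + Suc N) (\<Sum>i<Suc (2 * K). fps_X ^ (c + gg K i) * (t i * DD L))
                        (\<Sum>i<Suc (2 * K). fps_X ^ (c + gg K i) * 1)"
  proof (rule eqm_sum)
    fix i assume "i \<in> {..<Suc (2 * K)}"
    then have i: "i \<le> 2 * K" by simp
    show "eqm (c + Suc N) (fps_X ^ (c + gg K i) * (t i * DD L)) (fps_X ^ (c + gg K i) * 1)"
    proof (cases "Suc N \<le> gg K i")
      case True
      then have "c + Suc N \<le> c + gg K i" by simp
      then have a: "eqm (c + Suc N) (fps_X ^ (c + gg K i) * (t i * DD L)) 0"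
        and b: "eqm (c + Suc N) (fps_X ^ (c + gg K i) * 1) 0"
        by (rule eqm_Xpow_zero)+
      show ?thesis by (rule eqm_trans[OF a eqm_sym[OF b]])
    next
      case False
      then have "int (gg K i) \<le> int N" by simp
      then have "\<bar>int i - int K\<bar> \<le> int N" by (rule order_trans[OF gg_abs])
      then have "int (min i (2 * K - i)) \<ge> int N + 1"
        using min_int[OF i] unfolding K_def by simp
      then have mn: "Suc N \<le> 4 * (min i (2 * K - i) + 1)" by simp
      have "eqm (4 * (min i (2 * K - i) + 1)) (t i * DD L) 1"
        unfolding t_def L_def by (rule qb_DD) (use i in auto)
      then have "eqm (c + gg K i + 4 * (min i (2 * K - i) + 1))
                   (fps_X ^ (c + gg K i) * (t i * DD L)) (fps_X ^ (c + gg K i) * 1)"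
        by (rule eqm_shift)
      then show ?thesis by (rule eqm_mono) (use mn in simp)
    qed
  qed
  have s2: "(\<Sum>i<Suc (2 * K). fps_X ^ (c + gg K i) * 1)
       = fps_X ^ c * (\<Sum>i<Suc (2 * K). (fps_X::bit fps) ^ gg K i)"
    by (simp only: mult_1_right sum_distrib_left power_add)
  have "eqm (c + Suc N) (fps_X ^ c * (OP K * DD L))
                      (fps_X ^ c * (\<Sum>i<Suc (2 * K). fps_X ^ gg K i))"
    unfolding lhs s2[symmetric] by (rule e)
  then show ?thesis unfolding L_def by (rule eqm_unshift)
qed


lemma F_eq_G:
  fixes N :: nat
  defines "K \<equiv> 2 * N + 1"
  shows "eqm (Suc N) (F N) (\<Sum>i<Suc (2 * K). fps_X ^ gg K i)"
proof -
  define P where "P = OP K * DD (2 * K)"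
  define G where "G = (\<Sum>i<Suc (2 * K). (fps_X::bit fps) ^ gg K i)"
  have g: "eqm (Suc N) P G" unfolding P_def G_def K_def by (rule main_jtp)
  have "eqm (4 * (N div 4 + 1)) (DD (N div 4)) (DD (2 * K))"
    by (rule DD_ext) (simp add: K_def)
  then have d: "eqm (Suc N) (DD (N div 4)) (DD (2 * K))"
    by (rule eqm_mono) presburger
  have a: "eqm (Suc N) (AA N) (AA (2 * K))"
    by (rule AA_ext) (simp add: K_def)
  have eu: "eqm (Suc N) (AA (2 * K) * OP K) 1"
    using euler_trunc[of K] by (rule eqm_mono) (simp add: K_def)
  have "eqm (Suc N) (Qd N * P) (Qd N * OP K * DD (N div 4))"
    unfolding P_def mult.assoc[symmetric] by (rule eqm_mult_left[OF eqm_sym[OF d]])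
  also have "Qd N * OP K * DD (N div 4) = AA N * OP K"
    using Qd_DD[of N] by (simp only: mult_ac)
  finally have "eqm (Suc N) (Qd N * P) (AA N * OP K)" .
  moreover have "eqm (Suc N) (AA N * OP K) (AA (2 * K) * OP K)"
    by (rule eqm_mult_right[OF a])
  ultimately have q: "eqm (Suc N) (Qd N * P) 1"
    using eu by (blast intro: eqm_trans)
  have "eqm (Suc N) (F N * (Qd N * P)) (F N * 1)"
    by (rule eqm_mult_left[OF q])
  moreover have "F N * (Qd N * P) = P"
    using F_Qd[of N] by (simp add: mult.assoc[symmetric])
  ultimately have "eqm (Suc N) P (F N)" by simp
  then have "eqm (Suc N) (F N) P" by (rule eqm_sym)
  then show ?thesis using g unfolding G_def by (rule eqm_trans)
qed

lemma b_odd_tri: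
  assumes "odd (b 4 N)"
  shows "\<exists>m::int. int N = 2 * m^2 - m"
proof -
  define K where "K = 2 * N + 1"
  have "fps_nth (F N) N = fps_nth (\<Sum>i<Suc (2 * K). (fps_X::bit fps) ^ gg K i) N"
    using F_eq_G[of N] unfolding K_def eqm_def by simp
  then have e: "(of_nat (b 4 N) :: bit) = (\<Sum>i<Suc (2 * K). fps_nth ((fps_X::bit fps) ^ gg K i) N)"
    by (simp only: F_nth fps_sum_nth)
  show ?thesis
  proof (rule ccontr)
    assume "\<not> ?thesis"
    then have "\<forall>i. gg K i \<noteq> N" using gg_int by metis
    then have "(\<Sum>i<Suc (2 * K). fps_nth ((fps_X::bit fps) ^ gg K i) N) = 0"
      by (intro sum.neutral ballI) (metis fps_X_power_nth)
    then have "(of_nat (b 4 N) :: bit) = 0" using e by simp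
    then show False using assms by (simp add: of_nat_bit)
  qed
qed


lemma sq_div:
  assumes "prime (p::nat)"
  shows "p ^ (2 * a) * R = w ^ 2 \<Longrightarrow> \<exists>v. R = v ^ 2"
proof (induction a arbitrary: w)
  case 0 then show ?case by auto
next
  case (Suc a)
  have "p dvd w ^ 2" using Suc.prems[symmetric] by (simp add: dvd_def)
  then have "p dvd w" using assms prime_dvd_power by blast
  then obtain w' where w: "w = p * w'" by (auto simp: dvd_def)
  have pe: "p ^ (2 * Suc a) = p ^ 2 * p ^ (2 * a)" by (metis mult_Suc_right power_add)
  have "p ^ 2 * (p ^ (2 * a) * R) = p ^ (2 * Suc a) * R" unfolding pe by (simp only: mult.assoc)
  also have "\<dots> = w ^ 2" by (rule Suc.prems)
  also have "\<dots> = p ^ 2 * w' ^ 2" unfolding w by (rule power_mult_distrib)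
  finally have "p ^ 2 * (p ^ (2 * a) * R) = p ^ 2 * w' ^ 2" .
  moreover have nz: "p ^ 2 \<noteq> 0" using prime_gt_0_nat[OF assms] by simp
  ultimately have "p ^ (2 * a) * R = w' ^ 2" using mult_left_cancel by blast
  then show ?case by (rule Suc.IH)
qed

lemma odd_sq_mod8:
  assumes "odd (p::nat)" shows "p ^ (2 * a) mod 8 = 1"
proof (induction a)
  case 0 then show ?case by simp
next
  case (Suc a)
  have "p mod 8 = 1 \<or> p mod 8 = 3 \<or> p mod 8 = 5 \<or> p mod 8 = 7" using assms by presburger
  moreover have "p ^ 2 mod 8 = (p mod 8) ^ 2 mod 8" by (simp only: power_mod)
  ultimately have p2: "p ^ 2 mod 8 = 1" by auto
  have pe: "p ^ (2 * Suc a) = p ^ (2 * a) * p ^ 2" by (metis mult_Suc_right power_add mult.commute)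
  have "p ^ (2 * a) * p ^ 2 mod 8 = (p ^ (2 * a) mod 8) * (p ^ 2 mod 8) mod 8"
    by (rule mod_mult_eq[symmetric])
  then show ?case unfolding pe using Suc.IH p2 by simp
qed


theorem theorem3p11:
  fixes p \<alpha> n j :: nat
  assumes "prime p" and "odd p"
    and "j \<le> p - 1"
    and "Legendre (int (8 * j + 1)) (int p) = -1"
  shows "even (b 4 (p ^ (2 * \<alpha> + 1) * n + ((8 * j + 1) * p ^ (2 * \<alpha>) - 1) div 8))"
proof (rule ccontr)
  define T where "T = (8 * j + 1) * p ^ (2 * \<alpha>)"
  define X where "X = p ^ (2 * \<alpha> + 1) * n + (T - 1) div 8"
  assume "\<not> even (b 4 (p ^ (2 * \<alpha> + 1) * n + ((8 * j + 1) * p ^ (2 * \<alpha>) - 1) div 8))"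
  then have "odd (b 4 X)" unfolding X_def T_def by simp
  then obtain m :: int where m: "int X = 2 * m ^ 2 - m" using b_odd_tri by blast
  have "T mod 8 = ((8 * j + 1) mod 8) * (p ^ (2 * \<alpha>) mod 8) mod 8"
    unfolding T_def by (rule mod_mult_eq[symmetric])
  then have T8: "T mod 8 = 1" using odd_sq_mod8[OF assms(2), of \<alpha>] by simp
  have "T = 8 * (T div 8) + T mod 8" by simp
  then have T1: "T - 1 = 8 * ((T - 1) div 8)" using T8 by presburger
  have pa: "p ^ (2 * \<alpha> + 1) = p ^ (2 * \<alpha>) * p" by simp
  have eX: "8 * X + 1 = p ^ (2 * \<alpha>) * (8 * p * n + 8 * j + 1)"
  proof -
    have "8 * X + 1 = 8 * (p ^ (2 * \<alpha> + 1) * n) + (8 * ((T - 1) div 8) + 1)"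
      unfolding X_def by simp
    also have "\<dots> = 8 * (p ^ (2 * \<alpha> + 1) * n) + T"
      using T1 T8 by (metis One_nat_def Suc_pred' gr0I mod_0 zero_neq_one add.commute plus_1_eq_Suc)
    also have "\<dots> = p ^ (2 * \<alpha>) * (8 * p * n + 8 * j + 1)"
      unfolding pa T_def by (simp add: algebra_simps)
    finally show ?thesis .
  qed
  define w where "w = nat \<bar>4 * m - 1\<bar>"
  have "int (8 * X + 1) = (4 * m - 1) ^ 2"
    using m by (simp add: algebra_simps power2_eq_square)
  also have "\<dots> = int (w ^ 2)" unfolding w_def by simp
  finally have "8 * X + 1 = w ^ 2" by (simp only: of_nat_eq_iff)
  then have "p ^ (2 * \<alpha>) * (8 * p * n + 8 * j + 1) = w ^ 2" using eX by simp
  then obtain v where v: "8 * p * n + 8 * j + 1 = v ^ 2"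
    using sq_div[OF assms(1)] by blast
  have "int v ^ 2 = int (8 * j + 1) + int p * (8 * int n)"
    using arg_cong[OF v, of int] by (simp add: algebra_simps)
  then have "[int v ^ 2 = int (8 * j + 1)] (mod int p)"
    unfolding cong_def by simp
  then have "QuadRes (int p) (int (8 * j + 1))" unfolding QuadRes_def by blast
  then have "Legendre (int (8 * j + 1)) (int p) \<noteq> -1" unfolding Legendre_def by simp
  then show False using assms(4) by simp
qed

end
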